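(* Let $m>1$, let $[a,b]$ be the computational domain with mesh size $\Delta x=(b-a)/N_x$, cell centers $x_i=a+i\Delta x$ and interfaces $x_{i+1/2}=a+(i+1/2)\Delta x$, and time step $\Delta t$, $\lambda=\Delta t/\Delta x$. Given cell averages $\rho^n_i$, interface velocities $u^n_{i+1/2}$ and growth values $G^n_i$, the scheme proceeds as follows. (Prediction) $u^{n*}_{i+1/2}$ solves the linear system \[ \frac{u^{n*}_{i+1/2}-u^n_{i+1/2}}{\Delta t}=\frac{m}{\Delta x}\Big\{(\rho^n_{i+1})^{m-2}\Big(\frac{\rho^n_{i+3/2}u^{n*}_{i+3/2}-\rho^n_{i+1/2}u^{n*}_{i+1/2}}{\Delta x}-\rho^n_{i+1}G^n_i\Big)-(\rho^n_i)^{m-2}\Big(\frac{\rho^n_{i+1/2}u^{n*}_{i+1/2}-\rho^n_{i-1/2}u^{n*}_{i-1/2}}{\Delta x}-\rho^n_iG^n_i\Big)\Big\}, \] with $\rho^n_{i+1/2}=(\rho^n_i+\rho^n_{i+1})/2$. (Density update) \[ \frac{\rho^{n+1}_i-\rho^n_i}{\Delta t}+\frac{F^n_{i+1/2}-F^n_{i-1/2}}{\Delta x}=\rho^{n+1}_iG^n_i,\qquad F^n_{i+1/2}=\tfrac12\big[\rho^{Ln}_{i+1/2}u^{n*}_{i+1/2}+\rho^{Rn}_{i+1/2}u^{n*}_{i+1/2}-|u^{n*}_{i+1/2}|(\rho^{Rn}_{i+1/2}-\rho^{Ln}_{i+1/2})\big], \] where $\rho^{Ln}_{i+1/2}=\rho^n_i+\frac{\Delta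 x}{2}(\partial_x\rho)^n_i$, $\rho^{Rn}_{i+1/2}=\rho^n_{i+1}-\frac{\Delta x}{2}(\partial_x\rho)^n_{i+1}$, and the slope $(\partial_x\rho)^n_i$ is the minmod of $\frac{\rho^n_{i+1}-\rho^n_i}{\Delta x},\frac{\rho^n_{i+1}-\rho^n_{i-1}}{2\Delta x},\frac{\rho^n_i-\rho^n_{i-1}}{\Delta x}$ (the minimum if all three are positive, the maximum if all three are negative, and $0$ otherwise). (Correction) $u^{n+1}_{i+1/2}=-\frac{m}{m-1}\frac{(\rho^{n+1}_{i+1})^{m-1}-(\rho^{n+1}_i)^{m-1}}{\Delta x}$. Assume $0\le G^n_i\le G_{\max}$ for all $n,i$, and that there is a constant $U>0$ with $|u^{n*}_{i+1/2}|\le U$ for all $n,i$. Assume the initial cell averages satisfy $\rho^0_i\ge0$ for all $i$. If \[ \Delta t\le\frac{\Delta x}{2U}\qquad\text{and}\qquad 1-G_{\max}\Delta t>0, \] then $\rho^n_i\ge0$ for all $n\in\mathbb N$ and all $i$.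
   Context: This is a fully discrete scheme for the 1D cell density model $\partial_t\rho-\partial_x(\rho\,\partial_xp(\rho))=\rho G$, $p(\rho)=\frac{m}{m-1}\rho^{m-1}$, written with velocity $u=-\partial_xp(\rho)$ on a staggered grid ($\rho$ as cell averages, $u$ at cell interfaces). The paper phrases the velocity bound as $\max_{n,j}u^{n*}_{j+1/2}\le U$; the bound is used on the magnitude $|u^{n*}_{j+1/2}|$. *)

theory Defs
  imports Complex_Main
begin

definition minmod3 :: "real \<Rightarrow> real \<Rightarrow> real \<Rightarrow> real" where
  "minmod3 p q r =
     (if p > 0 \<and> q > 0 \<and> r > 0 then min p (min q r)
      else if p < 0 \<and> q < 0 \<and> r < 0 then max p (max q r)
      else 0)"

text \<open>Grid functions are indexed by integers; for interface quantities,
  index i stands for the interface x_{i+1/2}.\<close>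

definition slope :: "real \<Rightarrow> (int \<Rightarrow> real) \<Rightarrow> int \<Rightarrow> real" where
  "slope dx r i = minmod3 ((r (i+1) - r i) / dx) ((r (i+1) - r (i-1)) / (2*dx))
                          ((r i - r (i-1)) / dx)"

definition rhoL :: "real \<Rightarrow> (int \<Rightarrow> real) \<Rightarrow> int \<Rightarrow> real" where
  "rhoL dx r i = r i + dx / 2 * slope dx r i"

definition rhoR :: "real \<Rightarrow> (int \<Rightarrow> real) \<Rightarrow> int \<Rightarrow> real" where
  "rhoR dx r i = r (i+1) - dx / 2 * slope dx r (i+1)"

definition flux :: "real \<Rightarrow> (int \<Rightarrow> real) \<Rightarrow> (int \<Rightarrow> real) \<Rightarrow> int \<Rightarrow> real" where
  "flux dx r v i = (rhoL dx r i * v i + rhoR dx r i * v i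
                    - \<bar>v i\<bar> * (rhoR dx r i - rhoL dx r i)) / 2"

definition rhoHalf :: "(int \<Rightarrow> real) \<Rightarrow> int \<Rightarrow> real" where
  "rhoHalf r i = (r i + r (i+1)) / 2"

end

theory Submission
  imports Defs
begin

lemma slope_bound:
  assumes dx: "dx > 0" and r: "\<And>j. r j \<ge> 0"
  shows "\<bar>dx * slope dx r i\<bar> \<le> r i"
proof -
  have a: "r (i-1) \<ge> 0" "r (i+1) \<ge> 0" "r i \<ge> 0" using r by auto
  let ?p = "(r (i+1) - r i) / dx" and ?q = "(r (i+1) - r (i-1)) / (2*dx)"
    and ?s = "(r i - r (i-1)) / dx"
  have e1: "dx * ?p = r (i+1) - r i" "dx * ?s = r i - r (i-1)" using dx by auto
  show ?thesis
  proof (cases "?p > 0 \<and> ?q > 0 \<and> ?s > 0")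
    case True
    then have "slope dx r i = min ?p (min ?q ?s)" by (simp add: slope_def minmod3_def)
    moreover have "min ?p (min ?q ?s) \<le> ?s" by simp
    moreover have "min ?p (min ?q ?s) > 0" using True by simp
    ultimately have "0 < slope dx r i" "slope dx r i \<le> ?s" by auto
    then have "0 \<le> dx * slope dx r i" "dx * slope dx r i \<le> dx * ?s"
      using dx by (simp, intro mult_left_mono, auto)
    then show ?thesis using e1 a by auto
  next
    case F: False
    show ?thesis
    proof (cases "?p < 0 \<and> ?q < 0 \<and> ?s < 0")
      case True
      then have "slope dx r i = max ?p (max ?q ?s)" using F by (simp add: slope_def minmod3_def)
      moreover have "max ?p (max ?q ?s) \<ge> ?p" by simp
      moreover have "max ?p (max ?q ?s) < 0" using True by simp
      ultimately have "slope dx r i < 0" "?p \<le> slope dx r i" by auto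
      then have "dx * slope dx r i \<le> 0" "dx * ?p \<le> dx * slope dx r i"
        using dx by (simp add: mult_nonneg_nonpos, intro mult_left_mono, auto)
      then show ?thesis using e1 a by auto
    next
      case False
      have "slope dx r i = 0" unfolding slope_def minmod3_def
        by (simp only: if_not_P[OF F] if_not_P[OF False])
      then show ?thesis using a by simp
    qed
  qed
qed

lemma flux_upper:
  fixes L R v U :: real
  assumes "0 \<le> L" "0 \<le> R" "\<bar>v\<bar> \<le> U"
  shows "(L*v + R*v - \<bar>v\<bar>*(R-L))/2 \<le> U*L"
proof (cases "v \<ge> 0")
  case True
  then have "(L*v + R*v - \<bar>v\<bar>*(R-L))/2 = L*v" by (simp add: algebra_simps)
  also have "\<dots> \<le> L*U" using assms True by (intro mult_left_mono) auto
  finally show ?thesis by (simp add: mult.commute)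
next
  case False
  then have "(L*v + R*v - \<bar>v\<bar>*(R-L))/2 = R*v" by (simp add: algebra_simps)
  also have "\<dots> \<le> 0" using assms False by (simp add: mult_nonneg_nonpos)
  also have "0 \<le> U*L" using assms by auto
  finally show ?thesis .
qed

lemma flux_lower:
  fixes L R v U :: real
  assumes "0 \<le> L" "0 \<le> R" "\<bar>v\<bar> \<le> U"
  shows "(L*v + R*v - \<bar>v\<bar>*(R-L))/2 \<ge> - U*R"
proof (cases "v \<ge> 0")
  case True
  then have "(L*v + R*v - \<bar>v\<bar>*(R-L))/2 = L*v" by (simp add: algebra_simps)
  moreover have "L*v \<ge> 0" using assms True by simp
  moreover have "- U*R \<le> 0" using assms by auto
  ultimately show ?thesis by linarith
next
  case False
  then have "(L*v + R*v - \<bar>v\<bar>*(R-L))/2 = R*v" by (simp add: algebra_simps)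
  moreover have "R*(-v) \<le> R*U" using assms False by (intro mult_left_mono) auto
  ultimately show ?thesis by (simp add: algebra_simps)
qed

lemma step:
  assumes dx: "dx > 0" and r: "\<And>j. r j \<ge> 0"
    and vb: "\<And>j. \<bar>v j\<bar> \<le> U"
    and dt: "dt > 0" and cfl: "dt \<le> dx / (2*U)" and U: "U > 0"
    and g: "0 \<le> g" "1 - g * dt > 0"
    and upd: "(r' - r i) / dt + (flux dx r v i - flux dx r v (i-1)) / dx = r' * g"
  shows "r' \<ge> 0"
proof -
  have sb: "\<bar>dx * slope dx r i\<bar> \<le> r i" by (rule slope_bound[OF dx r])
  have sb1: "\<bar>dx * slope dx r (i+1)\<bar> \<le> r (i+1)" by (rule slope_bound[OF dx r])
  have sb0: "\<bar>dx * slope dx r (i-1)\<bar> \<le> r (i-1)" by (rule slope_bound[OF dx r])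
  define L where "L = rhoL dx r i"
  define R where "R = rhoR dx r (i-1)"
  have L0: "L \<ge> 0" using sb unfolding L_def rhoL_def by (simp add: abs_le_iff)
  have R0: "R \<ge> 0" using sb unfolding R_def rhoR_def by (simp add: abs_le_iff)
  have LR: "L + R = 2 * r i" unfolding L_def R_def rhoL_def rhoR_def by simp
  have R2: "rhoR dx r i \<ge> 0" using sb1 unfolding rhoR_def by (simp add: abs_le_iff)
  have L1: "rhoL dx r (i-1) \<ge> 0" using sb0 unfolding rhoL_def by (simp add: abs_le_iff)
  have Fi: "flux dx r v i \<le> U * L"
    unfolding flux_def L_def by (rule flux_upper[OF _ R2 vb]) (use L0 L_def in simp)
  have Fi1: "flux dx r v (i-1) \<ge> - U * R"
    unfolding flux_def R_def using flux_lower[OF L1 R0[unfolded R_def] vb[of "i-1"]]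
    by (simp add: rhoR_def)
  have D: "flux dx r v i - flux dx r v (i-1) \<le> 2 * U * r i"
    proof -
    have "U*L + U*R = 2*U*r i" using LR by (metis distrib_left mult.assoc mult.commute)
    then show ?thesis using Fi Fi1 by linarith
  qed
  have e: "r' * (1 - g*dt) = r i - dt/dx * (flux dx r v i - flux dx r v (i-1))"
  proof -
    define F where "F = flux dx r v i - flux dx r v (i-1)"
    have u2: "(r' - r i) / dt + F / dx = r' * g" using upd unfolding F_def .
    then have "dt * ((r' - r i) / dt + F / dx) = dt * (r' * g)" by simp
    then have "dt * ((r' - r i) / dt) + dt * (F / dx) = dt * (r' * g)" by (simp only: distrib_left)
    moreover have "dt * ((r' - r i) / dt) = r' - r i" using dt by simp
    moreover have "dt * (F / dx) = dt/dx * F" by simp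
    moreover have "dt * (r' * g) = r' * (g*dt)" by simp
    ultimately have "r' - r i + dt/dx * F = r' * (g*dt)" by simp
    then show ?thesis unfolding F_def by (simp add: right_diff_distrib)
  qed
  have "dt * (2*U) \<le> dx" using cfl U by (simp add: field_simps)
  then have lam: "dt/dx * (2*U) \<le> 1" using dx by (simp add: field_simps)
  have "dt/dx * (flux dx r v i - flux dx r v (i-1)) \<le> dt/dx * (2*U*r i)"
    using D dt dx by (intro mult_left_mono) auto
  also have "\<dots> = (dt/dx * (2*U)) * r i" by simp
  also have "\<dots> \<le> 1 * r i" using lam r[of i] by (intro mult_right_mono) auto
  finally have "r' * (1 - g*dt) \<ge> 0" using e by simp
  then show ?thesis using g by (simp add: zero_le_mult_iff)
qed

theorem mainTheorem3:
  fixes m a b dt U Gmax :: real and Nx :: nat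
    and rho u ustar G :: "nat \<Rightarrow> int \<Rightarrow> real"
  assumes m: "m > 1"
    and ab: "a < b" and Nx: "Nx > 0"
    and dt: "dt > 0"
    and prediction: "\<And>n i. (ustar n i - u n i) / dt =
        m / ((b - a) / real Nx) *
        ((rho n (i+1)) powr (m - 2) *
           ((rhoHalf (rho n) (i+1) * ustar n (i+1) - rhoHalf (rho n) i * ustar n i) / ((b - a) / real Nx)
            - rho n (i+1) * G n i)
         - (rho n i) powr (m - 2) *
           ((rhoHalf (rho n) i * ustar n i - rhoHalf (rho n) (i-1) * ustar n (i-1)) / ((b - a) / real Nx)
            - rho n i * G n i))"
    and update: "\<And>n i. (rho (Suc n) i - rho n i) / dt
        + (flux ((b - a) / real Nx) (rho n) (ustar n) i
           - flux ((b - a) / real Nx) (rho n) (ustar n) (i-1)) / ((b - a) / real Nx)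
        = rho (Suc n) i * G n i"
    and correction: "\<And>n i. u (Suc n) i =
        - (m / (m - 1)) * ((rho (Suc n) (i+1)) powr (m - 1) - (rho (Suc n) i) powr (m - 1))
          / ((b - a) / real Nx)"
    and G: "\<And>n i. 0 \<le> G n i \<and> G n i \<le> Gmax"
    and U: "U > 0" and ubound: "\<And>n i. \<bar>ustar n i\<bar> \<le> U"
    and init: "\<And>i. rho 0 i \<ge> 0"
    and cfl: "dt \<le> ((b - a) / real Nx) / (2 * U)"
    and growth: "1 - Gmax * dt > 0"
  shows "\<forall>n i. rho n i \<ge> 0"
proof
  fix n show "\<forall>i. rho n i \<ge> 0"
  proof (induction n)
    case 0 then show ?case using init by auto
  next
    case (Suc n)
    have dx: "(b - a) / real Nx > 0" using ab Nx by simp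
    show ?case
    proof
      fix i
      have g: "0 \<le> G n i" "1 - G n i * dt > 0"
      proof -
        show "0 \<le> G n i" using G by auto
        have "G n i * dt \<le> Gmax * dt" using G[of n i] dt by (intro mult_right_mono) auto
        then show "1 - G n i * dt > 0" using growth by linarith
      qed
      show "rho (Suc n) i \<ge> 0"
        by (rule step[OF dx _ ubound dt cfl U g update]) (use Suc in auto)
    qed
  qed
qed

end
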